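(* Let $n,m\in\mathbb{N}$, $W_0\in\mathbb{R}^{n\times m}$, and $1\le r<\operatorname{rank}(W_0)\le\min(n,m)$. Let $W_0=U\Sigma_0V^T$ be a singular value decomposition with $U\in\mathbb{R}^{n\times n}$, $V\in\mathbb{R}^{m\times m}$ orthogonal, $\Sigma_0\in\mathbb{R}^{n\times m}$ diagonal with singular values $s_{0,1}\ge s_{0,2}\ge\dots\ge s_{0,\min(n,m)}\ge 0$, and let $\mathbf{u}_i,\mathbf{v}_i$ denote the $i$-th columns of $U,V$. Assume the LoRA gradient-descent iterates for $\min_{B\in\mathbb{R}^{n\times r},A\in\mathbb{R}^{r\times m}}\frac12\|W_0-BA\|^2$ remain uniformly bounded. Let $\tilde X_0\in\mathbb{R}^{r\times m}$ have all off-diagonal entries zero and all diagonal entries $\tilde x_{ii}(0)$, $i=1,\dots,r$, nonzero (e.g. drawn i.i.d. from $\mathcal{N}(0,\sigma^2)$, $\sigma^2>0$). Let $(Y,X)$ solve the gradient flow $$Y'(t)=\big(W_0-Y(t)X(t)\big)X(t)^T,\quad X'(t)=Y(t)^T\big(W_0-Y(t)X(t)\big),\quad Y(0)=\mathbf{0}_{n\times r},\ X(0)=\tilde X_0V^T.$$ Then $$\lim_{t\to\infty}Y(t)X(t)=\sum_{i=1}^r s_{0,i}\,\mathbf{u}_i\mathbf{v}_i^T\qquad\text{and}\qquad \lim_{t\to\infty}\|W_0-Y(t)X(t)\|^2=\sum_{i=r+1}^{\min(n,m)}s_{0,i}^2,$$ i.e. the flow converges to the optimal rank-$r$ approximation of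 $W_0$ and attains the optimal rank-$r$ approximation error given by the Eckart--Young--Mirsky theorem; this is also the approximation error between the converged rank-$r$ solution and the full-rank solution $W_0$.
   Context: $\|\cdot\|$ is the Frobenius norm. "LoRA gradient-descent iterates" are the iterates of fixed-step gradient descent on the factors $B,A$ of $g(B,A)=\frac12\|W_0-BA\|^2$; uniform boundedness means their Frobenius norms are bounded independently of step size and iteration. The initialization corresponds to $\tilde Y(0)=U^TY(0)=\mathbf{0}$ and $\tilde X(0)=X(0)V=\tilde X_0$ (spectral initialization). *)

theory Defs
  imports "HOL-Analysis.Analysis" "Jordan_Normal_Form.DL_Rank"
begin

definition frob2 :: "real mat \<Rightarrow> real" where
  "frob2 A = (\<Sum>i<dim_row A. \<Sum>j<dim_col A. (A $$ (i,j))^2)"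

definition orth_mat :: "nat \<Rightarrow> real mat \<Rightarrow> bool" where
  "orth_mat k Q \<longleftrightarrow> Q \<in> carrier_mat k k \<and> Q\<^sup>T * Q = 1\<^sub>m k \<and> Q * Q\<^sup>T = 1\<^sub>m k"

(* Fixed-step gradient descent on g(B,A) = 1/2 ||W0 - B A||^2, step size eta,
   starting from (B0, A0): iterate k. *)
fun lora_gd :: "real mat \<Rightarrow> real \<Rightarrow> real mat \<Rightarrow> real mat \<Rightarrow> nat \<Rightarrow> real mat \<times> real mat" where
  "lora_gd W0 eta B0 A0 0 = (B0, A0)"
| "lora_gd W0 eta B0 A0 (Suc k) =
     (let (B, A) = lora_gd W0 eta B0 A0 k; R = W0 - B * A in
       (B + eta \<cdot>\<^sub>m (R * A\<^sup>T), A + eta \<cdot>\<^sub>m (B\<^sup>T * R)))"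

definition mat_deriv_on :: "nat \<Rightarrow> nat \<Rightarrow> (real \<Rightarrow> real mat) \<Rightarrow> (real \<Rightarrow> real mat) \<Rightarrow> bool" where
  "mat_deriv_on p q F F' \<longleftrightarrow>
     (\<forall>t\<ge>0. F t \<in> carrier_mat p q \<and> F' t \<in> carrier_mat p q \<and>
        (\<forall>i<p. \<forall>j<q. ((\<lambda>s. F s $$ (i,j)) has_real_derivative (F' t $$ (i,j))) (at t within {0..})))"

definition mat_tendsto_at_top :: "nat \<Rightarrow> nat \<Rightarrow> (real \<Rightarrow> real mat) \<Rightarrow> real mat \<Rightarrow> bool" where
  "mat_tendsto_at_top p q F L \<longleftrightarrow> L \<in> carrier_mat p q \<and>
     (\<forall>i<p. \<forall>j<q. ((\<lambda>t. F t $$ (i,j)) \<longlongrightarrow> L $$ (i,j)) at_top)"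

end

theory Submission
  imports Defs "HOL-Real_Asymp.Real_Asymp"
begin

lemma (in vec_space) rank_le_nr: assumes "A \<in> carrier_mat n nc" shows "rank A \<le> n"
proof -
  have "subspace class_ring (span (set (cols A))) V"
    by (metis assms cols_dim carrier_matD(1) span_is_subspace)
  moreover have "vectorspace.fin_dim class_ring (span_vs (set (cols A)))"
    using fin_dim_span_cols assms by auto
  ultimately show ?thesis unfolding rank_def
    using subspace_dim dim_is_n fin_dim by metis
qed
lemma rank_le_nr': "A \<in> carrier_mat n nc \<Longrightarrow> vec_space.rank n (A::real mat) \<le> n"
  using vec_space.rank_le_nr by blast
lemma rank_le_nc': "A \<in> carrier_mat n nc \<Longrightarrow> vec_space.rank n (A::real mat) \<le> nc"
  using vec_space.rank_le_nc by blast


lemma within_to_at: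
  assumes "(f has_real_derivative D) (at t within {0..})" "0 < t"
  shows "(f has_real_derivative D) (at t)"
proof -
  have "(f has_real_derivative D) (at t within {0<..})"
    by (rule DERIV_subset[OF assms(1)]) auto
  then show ?thesis using at_within_open[of t "{0<..}"] assms(2) by simp
qed

lemma decr_from_deriv:
  fixes g g' :: "real \<Rightarrow> real"
  assumes d: "\<And>t. 0 \<le> t \<Longrightarrow> (g has_real_derivative g' t) (at t within {0..})"
    and neg: "\<And>t. 0 < t \<Longrightarrow> t < T \<Longrightarrow> g' t \<le> 0"
    and T: "0 \<le> T"
  shows "g T \<le> g 0"
proof -
  have c: "continuous_on {0..} g"
    by (rule DERIV_continuous_on[of _ _ g']) (use d in auto)
  have "continuous_on {0..T} g" by (rule continuous_on_subset[OF c]) auto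
  moreover have "\<And>x. 0 < x \<Longrightarrow> x < T \<Longrightarrow> \<exists>y. DERIV g x :> y \<and> y \<le> 0"
    using d neg within_to_at by (meson less_imp_le)
  ultimately show ?thesis using DERIV_nonpos_imp_decreasing_open[OF T] by blast
qed

lemma gronwall0:
  fixes E E' :: "real \<Rightarrow> real"
  assumes d: "\<And>t. 0 \<le> t \<Longrightarrow> (E has_real_derivative E' t) (at t within {0..})"
    and E0: "E 0 = 0" and Epos: "\<And>t. 0 \<le> t \<Longrightarrow> 0 \<le> E t"
    and K: "\<And>T. 0 \<le> T \<Longrightarrow> \<exists>K. \<forall>t. 0 \<le> t \<and> t \<le> T \<longrightarrow> E' t \<le> K * E t"
    and T: "0 \<le> T"
  shows "E T = 0"
proof -
  obtain K where K: "\<And>t. 0 \<le> t \<Longrightarrow> t \<le> T \<Longrightarrow> E' t \<le> K * E t" using K[OF T] by blast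
  define g where "g t = E t * exp (- K * t)" for t
  have dg: "(g has_real_derivative (E' t - K * E t) * exp (- K * t)) (at t within {0..})" if "0 \<le> t" for t
    unfolding g_def
    by (rule derivative_eq_intros refl d[OF that])+ (simp add: algebra_simps)
  have "g T \<le> g 0"
  proof (rule decr_from_deriv[OF dg _ T])
    fix t assume "0 < t" "t < T"
    then have "E' t - K * E t \<le> 0" using K[of t] by auto
    then show "(E' t - K * E t) * exp (- K * t) \<le> 0" by (simp add: mult_nonpos_nonneg)
  qed simp
  then have "E T * exp (- K * T) \<le> 0" using E0 by (simp add: g_def)
  then have "E T \<le> 0" by (simp add: mult_le_0_iff)
  then show ?thesis using Epos[OF T] by simp
qed

lemma const_from_deriv:
  fixes g :: "real \<Rightarrow> real"
  assumes d: "\<And>t. 0 \<le> t \<Longrightarrow> (g has_real_derivative 0) (at t within {0..})"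
    and T: "0 \<le> T"
  shows "g T = g 0"
proof -
  have "g T \<le> g 0" by (rule decr_from_deriv[OF d]) (use T in auto)
  moreover have "(\<lambda>t. - g t) T \<le> (\<lambda>t. - g t) 0"
    by (rule decr_from_deriv[of _ "\<lambda>t. 0"]) (use T d in \<open>auto intro!: derivative_eq_intros\<close>)
  ultimately show ?thesis by simp
qed

lemma scalar_conv:
  fixes y x :: "real \<Rightarrow> real" and s :: real
  assumes dy: "\<And>t. 0 \<le> t \<Longrightarrow> (y has_real_derivative (s - y t * x t) * x t) (at t within {0..})"
    and dx: "\<And>t. 0 \<le> t \<Longrightarrow> (x has_real_derivative y t * (s - y t * x t)) (at t within {0..})"
    and y0: "y 0 = 0" and x0: "x 0 \<noteq> 0"
  shows "((\<lambda>t. y t * x t) \<longlongrightarrow> s) at_top"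
proof -
  define c where "c = (x 0)^2"
  have cpos: "c > 0" using x0 by (simp add: c_def)
  have cons: "(x t)^2 - (y t)^2 = c" if "0 \<le> t" for t
  proof -
    have "(\<lambda>t. (x t)^2 - (y t)^2) t = (\<lambda>t. (x t)^2 - (y t)^2) 0"
    proof (rule const_from_deriv[OF _ that])
      fix t :: real assume "0 \<le> t"
      show "((\<lambda>t. (x t)^2 - (y t)^2) has_real_derivative 0) (at t within {0..})"
        by (rule derivative_eq_intros dx dy refl \<open>0 \<le> t\<close>)+ (simp add: algebra_simps)
    qed
    then show ?thesis by (simp add: c_def y0)
  qed
  define q where "q t = s - y t * x t" for t
  define g where "g t = (q t)^2 * exp (2 * c * t)" for t
  have dg: "(g has_real_derivative 2 * (q t)^2 * exp (2 * c * t) * (c - (x t)^2 - (y t)^2)) (at t within {0..})"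
    if "0 \<le> t" for t
    unfolding g_def q_def
    by (rule derivative_eq_intros dx dy refl that)+ (simp add: algebra_simps power2_eq_square)
  have bound: "(q t)^2 \<le> s^2 * exp (- 2 * c * t)" if "0 \<le> t" for t
  proof -
    have "g t \<le> g 0"
    proof (rule decr_from_deriv[OF dg _ that])
      fix u :: real assume "0 < u" "u < t"
      then have "c - (x u)^2 - (y u)^2 \<le> 0" using cons[of u] by auto
      then show "2 * (q u)^2 * exp (2 * c * u) * (c - (x u)^2 - (y u)^2) \<le> 0"
        by (simp add: mult_nonneg_nonpos)
    qed simp
    then have "(q t)^2 * exp (2 * c * t) \<le> s^2" by (simp add: g_def q_def y0)
    then have "(q t)^2 * exp (2 * c * t) * exp (- 2 * c * t) \<le> s^2 * exp (- 2 * c * t)"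
      by (simp add: mult_right_mono)
    then show ?thesis by (simp add: mult.assoc flip: exp_add)
  qed
  have abs_bound: "\<bar>q t\<bar> \<le> \<bar>s\<bar> * exp (- c * t)" if "0 \<le> t" for t
  proof -
    have e: "exp (- c * t) * exp (- c * t) = exp (- 2 * c * t)"
      by (subst exp_add[symmetric]) (simp add: algebra_simps)
    have "(\<bar>s\<bar> * exp (- c * t))^2 = (\<bar>s\<bar> * \<bar>s\<bar>) * (exp (- c * t) * exp (- c * t))"
      by (simp add: power2_eq_square algebra_simps)
    also have "\<dots> = s^2 * exp (- 2 * c * t)" using e by (simp add: power2_eq_square)
    finally have "(\<bar>s\<bar> * exp (- c * t))^2 = s^2 * exp (- 2 * c * t)" .
    then have "\<bar>q t\<bar>^2 \<le> (\<bar>s\<bar> * exp (- c * t))^2" using bound[OF that] by simp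
    then show ?thesis by (rule power2_le_imp_le) simp
  qed
  have lim0: "((\<lambda>t. \<bar>s\<bar> * exp (- c * t)) \<longlongrightarrow> 0) at_top"
    using cpos by real_asymp
  have "((\<lambda>t. q t) \<longlongrightarrow> 0) at_top"
  proof (rule tendsto_sandwich[of "\<lambda>t. - (\<bar>s\<bar> * exp (- c * t))" _ _ "\<lambda>t. \<bar>s\<bar> * exp (- c * t)"])
    show "\<forall>\<^sub>F t in at_top. - (\<bar>s\<bar> * exp (- c * t)) \<le> q t"
      using abs_bound unfolding eventually_at_top_linorder
      by (intro exI[of _ 0]) (smt (verit))
    show "\<forall>\<^sub>F t in at_top. q t \<le> \<bar>s\<bar> * exp (- c * t)"
      using abs_bound by (auto simp: eventually_at_top_linorder abs_le_iff intro!: exI[of _ 0])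
  qed (use lim0 tendsto_minus[OF lim0] in auto)
  then have "((\<lambda>t. s - q t) \<longlongrightarrow> s - 0) at_top" by (intro tendsto_intros)
  then show ?thesis by (simp add: q_def)
qed


lemma mult_entry:
  assumes "A \<in> carrier_mat p q" "B \<in> carrier_mat q s" "i < p" "j < s"
  shows "(A * B) $$ (i,j) = (\<Sum>l<q. A $$ (i,l) * B $$ (l,j))"
  using assms by (simp add: scalar_prod_def atLeast0LessThan)

lemma mat_deriv_left:
  assumes d: "mat_deriv_on p q F F'" and C: "C \<in> carrier_mat k p"
  shows "mat_deriv_on k q (\<lambda>t. C * F t) (\<lambda>t. C * F' t)"
  unfolding mat_deriv_on_def
proof (intro allI impI conjI)
  fix t :: real assume t: "0 \<le> t"
  have Ft: "F t \<in> carrier_mat p q" "F' t \<in> carrier_mat p q" using d t by (auto simp: mat_deriv_on_def)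
  show "C * F t \<in> carrier_mat k q" "C * F' t \<in> carrier_mat k q" using Ft C by auto
  fix i j assume ij: "i < k" "j < q"
  have "((\<lambda>s. \<Sum>l<p. C $$ (i,l) * F s $$ (l,j)) has_real_derivative (\<Sum>l<p. C $$ (i,l) * F' t $$ (l,j))) (at t within {0..})"
    using d t ij unfolding mat_deriv_on_def by (auto intro!: DERIV_sum DERIV_cmult)
  moreover have "(C * F' t) $$ (i,j) = (\<Sum>l<p. C $$ (i,l) * F' t $$ (l,j))" using Ft C ij by (simp add: scalar_prod_def atLeast0LessThan)
  ultimately have "((\<lambda>s. \<Sum>l<p. C $$ (i,l) * F s $$ (l,j)) has_real_derivative (C * F' t) $$ (i,j)) (at t within {0..})"
    by simp
  then show "((\<lambda>s. (C * F s) $$ (i, j)) has_real_derivative (C * F' t) $$ (i, j)) (at t within {0..})"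
  proof (rule has_field_derivative_transform_within[where d=1])
    fix s :: real assume "s \<in> {0..}"
    then have "F s \<in> carrier_mat p q" using d by (auto simp: mat_deriv_on_def)
    then show "(\<Sum>l<p. C $$ (i,l) * F s $$ (l,j)) = (C * F s) $$ (i, j)"
      using C ij by (simp add: scalar_prod_def atLeast0LessThan)
  qed (use t Ft C ij in \<open>auto simp: scalar_prod_def atLeast0LessThan\<close>)
qed

lemma mat_deriv_right:
  assumes d: "mat_deriv_on p q F F'" and C: "C \<in> carrier_mat q k"
  shows "mat_deriv_on p k (\<lambda>t. F t * C) (\<lambda>t. F' t * C)"
  unfolding mat_deriv_on_def
proof (intro allI impI conjI)
  fix t :: real assume t: "0 \<le> t"
  have Ft: "F t \<in> carrier_mat p q" "F' t \<in> carrier_mat p q" using d t by (auto simp: mat_deriv_on_def)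
  show "F t * C \<in> carrier_mat p k" "F' t * C \<in> carrier_mat p k" using Ft C by auto
  fix i j assume ij: "i < p" "j < k"
  have "((\<lambda>s. \<Sum>l<q. F s $$ (i,l) * C $$ (l,j)) has_real_derivative (\<Sum>l<q. F' t $$ (i,l) * C $$ (l,j))) (at t within {0..})"
    using d t ij unfolding mat_deriv_on_def by (auto intro!: DERIV_sum DERIV_cmult_right)
  moreover have "(F' t * C) $$ (i,j) = (\<Sum>l<q. F' t $$ (i,l) * C $$ (l,j))" using Ft C ij by (simp add: scalar_prod_def atLeast0LessThan)
  ultimately have "((\<lambda>s. \<Sum>l<q. F s $$ (i,l) * C $$ (l,j)) has_real_derivative (F' t * C) $$ (i,j)) (at t within {0..})"
    by simp
  then show "((\<lambda>s. (F s * C) $$ (i, j)) has_real_derivative (F' t * C) $$ (i, j)) (at t within {0..})"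
  proof (rule has_field_derivative_transform_within[where d=1])
    fix s :: real assume "s \<in> {0..}"
    then have "F s \<in> carrier_mat p q" using d by (auto simp: mat_deriv_on_def)
    then show "(\<Sum>l<q. F s $$ (i,l) * C $$ (l,j)) = (F s * C) $$ (i, j)"
      using C ij by (simp add: scalar_prod_def atLeast0LessThan)
  qed (use t Ft C ij in \<open>auto simp: scalar_prod_def atLeast0LessThan\<close>)
qed

lemma frob2_trace:
  assumes "A \<in> carrier_mat p q"
  shows "frob2 A = (\<Sum>j<q. (A\<^sup>T * A) $$ (j,j))"
proof -
  have "(\<Sum>j<q. (A\<^sup>T * A) $$ (j,j)) = (\<Sum>j<q. \<Sum>i<p. (A $$ (i,j))^2)"
    using assms by (intro sum.cong refl) (simp add: scalar_prod_def atLeast0LessThan power2_eq_square)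
  also have "\<dots> = frob2 A" unfolding frob2_def using assms by (simp add: sum.swap[of _ "{..<q}"])
  finally show ?thesis by simp
qed

lemma frob2_transpose: "frob2 (A\<^sup>T) = frob2 A"
  unfolding frob2_def by (simp add: sum.swap[of _ "{..<dim_col A}"])

lemma frob2_left_orth:
  assumes U: "orth_mat p U" and M: "M \<in> carrier_mat p q"
  shows "frob2 (U * M) = frob2 M"
proof -
  have Uc: "U \<in> carrier_mat p p" and UU: "U\<^sup>T * U = 1\<^sub>m p" using U by (auto simp: orth_mat_def)
  have "(U * M)\<^sup>T * (U * M) = (M\<^sup>T * U\<^sup>T) * (U * M)" using Uc M by (simp add: transpose_mult)
  also have "\<dots> = M\<^sup>T * ((U\<^sup>T * U) * M)" using Uc M by (simp add: assoc_mult_mat[of _ q p _ p _ q])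
  also have "\<dots> = M\<^sup>T * M" using UU M by simp
  finally have e: "(U * M)\<^sup>T * (U * M) = M\<^sup>T * M" .
  show ?thesis using frob2_trace[of "U * M" p q] frob2_trace[OF M] e Uc M by simp
qed

lemma frob2_right_orth:
  assumes V: "orth_mat q V" and M: "M \<in> carrier_mat p q"
  shows "frob2 (M * V\<^sup>T) = frob2 M"
proof -
  have Vc: "V \<in> carrier_mat q q" using V by (auto simp: orth_mat_def)
  have "frob2 (M * V\<^sup>T) = frob2 ((M * V\<^sup>T)\<^sup>T)" by (simp add: frob2_transpose)
  also have "(M * V\<^sup>T)\<^sup>T = V * M\<^sup>T" using Vc M by (simp add: transpose_mult[of M p q])
  also have "frob2 (V * M\<^sup>T) = frob2 (M\<^sup>T)" using frob2_left_orth[OF V, of "M\<^sup>T" p] M by simp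
  finally show ?thesis by (simp add: frob2_transpose)
qed


definition off :: "nat \<Rightarrow> nat \<Rightarrow> real \<Rightarrow> real" where
  "off i j x = (if i = j then 0 else x)"

lemma single_le_dsum:
  fixes f :: "nat \<Rightarrow> nat \<Rightarrow> real"
  assumes "i < p" "j < q" "\<And>i j. 0 \<le> f i j"
  shows "f i j \<le> (\<Sum>i<p. \<Sum>j<q. f i j)"
proof -
  have "f i j \<le> (\<Sum>j<q. f i j)" using assms by (intro member_le_sum) auto
  also have "\<dots> \<le> (\<Sum>i<p. \<Sum>j<q. f i j)" using assms by (intro member_le_sum[where f="\<lambda>i. \<Sum>j<q. f i j"] sum_nonneg) auto
  finally show ?thesis .
qed

lemma cs_sum:
  fixes f :: "'a \<Rightarrow> real"
  shows "(\<Sum>i\<in>I. \<bar>f i\<bar>)^2 \<le> real (card I) * (\<Sum>i\<in>I. (f i)^2)"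
  using Cauchy_Schwarz_ineq_sum[of "\<lambda>_. 1" "\<lambda>i. \<bar>f i\<bar>" I] by simp

lemma cs_dsum:
  fixes f :: "nat \<Rightarrow> nat \<Rightarrow> real"
  shows "(\<Sum>i<p. \<Sum>j<q. \<bar>f i j\<bar>)^2 \<le> real p * real q * (\<Sum>i<p. \<Sum>j<q. (f i j)^2)"
proof -
  have "(\<Sum>i<p. \<Sum>j<q. \<bar>f i j\<bar>)^2 = (\<Sum>i<p. \<bar>\<Sum>j<q. \<bar>f i j\<bar>\<bar>)^2"
    by (simp add: sum_nonneg)
  also have "\<dots> \<le> real p * (\<Sum>i<p. (\<Sum>j<q. \<bar>f i j\<bar>)^2)"
    using cs_sum[of "\<lambda>i. \<Sum>j<q. \<bar>f i j\<bar>" "{..<p}"] by simp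
  also have "\<dots> \<le> real p * (\<Sum>i<p. real q * (\<Sum>j<q. (f i j)^2))"
    by (intro mult_left_mono sum_mono) (use cs_sum[of "f _" "{..<q}"] in auto)
  finally show ?thesis by (simp add: sum_distrib_left mult.assoc)
qed

lemma da_bound:
  fixes a b s :: "nat \<Rightarrow> nat \<Rightarrow> real"
  assumes aM: "\<And>i j. i < n \<Longrightarrow> j < r \<Longrightarrow> \<bar>a i j\<bar> \<le> M"
    and bM: "\<And>i j. i < r \<Longrightarrow> j < m \<Longrightarrow> \<bar>b i j\<bar> \<le> M"
    and sB: "\<And>i k. i < n \<Longrightarrow> k < m \<Longrightarrow> \<bar>s i k\<bar> \<le> Sb"
    and sD: "\<And>i k. i < n \<Longrightarrow> k < m \<Longrightarrow> i \<noteq> k \<Longrightarrow> s i k = 0"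
    and ij: "i < n" "j < r" "i \<noteq> j"
  defines "Ov \<equiv> (\<Sum>i<n. \<Sum>j<r. \<bar>off i j (a i j)\<bar>) + (\<Sum>i<r. \<Sum>j<m. \<bar>off i j (b i j)\<bar>)"
  shows "\<bar>\<Sum>k<m. (s i k - (\<Sum>l<r. a i l * b l k)) * b j k\<bar> \<le> real m * (Sb + real r * M^2) * Ov"
proof -
  have Oa: "\<bar>off i' j' (a i' j')\<bar> \<le> Ov" if "i' < n" "j' < r" for i' j'
  proof -
    have "\<bar>off i' j' (a i' j')\<bar> \<le> (\<Sum>i<n. \<Sum>j<r. \<bar>off i j (a i j)\<bar>)"
      using single_le_dsum[of i' n j' r "\<lambda>i j. \<bar>off i j (a i j)\<bar>"] that by simp
    moreover have "0 \<le> (\<Sum>i<r. \<Sum>j<m. \<bar>off i j (b i j)\<bar>)" by (simp add: sum_nonneg)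
    ultimately show ?thesis unfolding Ov_def by linarith
  qed
  have Ob: "\<bar>off i' j' (b i' j')\<bar> \<le> Ov" if "i' < r" "j' < m" for i' j'
  proof -
    have "\<bar>off i' j' (b i' j')\<bar> \<le> (\<Sum>i<r. \<Sum>j<m. \<bar>off i j (b i j)\<bar>)"
      using single_le_dsum[of i' r j' m "\<lambda>i j. \<bar>off i j (b i j)\<bar>"] that by simp
    moreover have "0 \<le> (\<Sum>i<n. \<Sum>j<r. \<bar>off i j (a i j)\<bar>)" by (simp add: sum_nonneg)
    ultimately show ?thesis unfolding Ov_def by linarith
  qed
  have Ov0: "0 \<le> Ov" unfolding Ov_def by (intro add_nonneg_nonneg sum_nonneg) auto
  have M0: "0 \<le> M" using aM[of i j] ij by auto
  have t1: "\<bar>s i k * b j k\<bar> \<le> Sb * Ov" if k: "k < m" for k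
  proof (cases "k = j")
    case True
    have Sb0: "0 \<le> Sb" using sB[OF ij(1) k] by linarith
    from True have "s i k = 0" using sD[OF ij(1) k] ij by auto
    then show ?thesis using Sb0 Ov0 by simp
  next
    case False
    have Sb0: "0 \<le> Sb" using sB[OF ij(1) k] by linarith
    from False have "\<bar>b j k\<bar> \<le> Ov" using Ob[of j k] ij k by (simp add: off_def)
    then have "\<bar>s i k\<bar> * \<bar>b j k\<bar> \<le> Sb * Ov"
      by (rule mult_mono[OF sB[OF ij(1) k]]) (use Sb0 in simp_all)
    then show ?thesis by (simp only: abs_mult)
  qed
  have MM: "\<bar>x\<bar> * \<bar>y\<bar> \<le> M * M" if "\<bar>x\<bar> \<le> M" "\<bar>y\<bar> \<le> M" for x y :: real
    by (rule mult_mono[OF that]) (use M0 in simp_all)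
  have t2: "\<bar>a i l * b l k * b j k\<bar> \<le> M^2 * Ov" if k: "k < m" and l: "l < r" for k l
  proof -
    have ail: "\<bar>a i l\<bar> \<le> M" using aM ij l by auto
    have blk: "\<bar>b l k\<bar> \<le> M" using bM l k by auto
    have bjk: "\<bar>b j k\<bar> \<le> M" using bM ij k by auto
    have e: "\<bar>a i l * b l k * b j k\<bar> = \<bar>a i l\<bar> * \<bar>b l k\<bar> * \<bar>b j k\<bar>" by (simp only: abs_mult)
    have key: "\<bar>x\<bar> * (\<bar>y\<bar> * \<bar>z\<bar>) \<le> M^2 * Ov" if "\<bar>x\<bar> \<le> Ov" "\<bar>y\<bar> \<le> M" "\<bar>z\<bar> \<le> M" for x y z :: real
    proof -
      have "\<bar>x\<bar> * (\<bar>y\<bar> * \<bar>z\<bar>) \<le> Ov * (M * M)"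
        by (rule mult_mono[OF that(1) MM[OF that(2,3)]]) (use Ov0 in simp_all)
      then show ?thesis by (simp add: power2_eq_square mult.commute)
    qed
    consider "i \<noteq> l" | "i = l" "l \<noteq> k" | "i = l" "l = k" "k \<noteq> j" using ij by blast
    then show ?thesis
    proof cases
      case 1
      then have "\<bar>a i l\<bar> \<le> Ov" using Oa[of i l] ij l by (simp add: off_def)
      from key[OF this blk bjk] show ?thesis unfolding e by (simp only: mult.assoc)
    next
      case 2
      then have "\<bar>b l k\<bar> \<le> Ov" using Ob[of l k] l k by (simp add: off_def)
      from key[OF this ail bjk] show ?thesis unfolding e by (simp only: mult.assoc mult.left_commute)
    next
      case 3
      then have "\<bar>b j k\<bar> \<le> Ov" using Ob[of j k] ij k by (simp add: off_def)
      from key[OF this ail blk] show ?thesis unfolding e by (simp only: mult.assoc mult.commute)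
    qed
  qed
  have eq: "(\<Sum>k<m. (s i k - (\<Sum>l<r. a i l * b l k)) * b j k)
      = (\<Sum>k<m. s i k * b j k) - (\<Sum>k<m. \<Sum>l<r. a i l * b l k * b j k)"
    by (simp add: left_diff_distrib sum_subtractf sum_distrib_right)
  have "\<bar>(\<Sum>k<m. s i k * b j k) - (\<Sum>k<m. \<Sum>l<r. a i l * b l k * b j k)\<bar> \<le> (\<Sum>k<m. \<bar>s i k * b j k\<bar>) + (\<Sum>k<m. \<Sum>l<r. \<bar>a i l * b l k * b j k\<bar>)"
  proof (rule order_trans[OF abs_triangle_ineq4 add_mono])
    show "\<bar>\<Sum>k<m. s i k * b j k\<bar> \<le> (\<Sum>k<m. \<bar>s i k * b j k\<bar>)" by (rule sum_abs)
    have "\<bar>\<Sum>k<m. \<Sum>l<r. a i l * b l k * b j k\<bar> \<le> (\<Sum>k<m. \<bar>\<Sum>l<r. a i l * b l k * b j k\<bar>)" by (rule sum_abs)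
    also have "\<dots> \<le> (\<Sum>k<m. \<Sum>l<r. \<bar>a i l * b l k * b j k\<bar>)" by (intro sum_mono sum_abs)
    finally show "\<bar>\<Sum>k<m. \<Sum>l<r. a i l * b l k * b j k\<bar> \<le> (\<Sum>k<m. \<Sum>l<r. \<bar>a i l * b l k * b j k\<bar>)" .
  qed
  also have "\<dots> \<le> (\<Sum>k<m. Sb * Ov) + (\<Sum>k<m. \<Sum>l<r. M^2 * Ov)"
    by (intro add_mono sum_mono t1 t2) auto
  also have "\<dots> = real m * (Sb + real r * M^2) * Ov" by (simp add: algebra_simps)
  finally show ?thesis unfolding eq .
qed

lemma db_bound:
  fixes a b s :: "nat \<Rightarrow> nat \<Rightarrow> real"
  assumes aM: "\<And>i j. i < n \<Longrightarrow> j < r \<Longrightarrow> \<bar>a i j\<bar> \<le> M"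
    and bM: "\<And>i j. i < r \<Longrightarrow> j < m \<Longrightarrow> \<bar>b i j\<bar> \<le> M"
    and sB: "\<And>i k. i < n \<Longrightarrow> k < m \<Longrightarrow> \<bar>s i k\<bar> \<le> Sb"
    and sD: "\<And>i k. i < n \<Longrightarrow> k < m \<Longrightarrow> i \<noteq> k \<Longrightarrow> s i k = 0"
    and ij: "i < r" "j < m" "i \<noteq> j"
  defines "Ov \<equiv> (\<Sum>i<n. \<Sum>j<r. \<bar>off i j (a i j)\<bar>) + (\<Sum>i<r. \<Sum>j<m. \<bar>off i j (b i j)\<bar>)"
  shows "\<bar>\<Sum>k<n. a k i * (s k j - (\<Sum>l<r. a k l * b l j))\<bar> \<le> real n * (Sb + real r * M^2) * Ov"
proof -
  have Oa: "\<bar>off i' j' (a i' j')\<bar> \<le> Ov" if "i' < n" "j' < r" for i' j'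
  proof -
    have "\<bar>off i' j' (a i' j')\<bar> \<le> (\<Sum>i<n. \<Sum>j<r. \<bar>off i j (a i j)\<bar>)"
      using single_le_dsum[of i' n j' r "\<lambda>i j. \<bar>off i j (a i j)\<bar>"] that by simp
    moreover have "0 \<le> (\<Sum>i<r. \<Sum>j<m. \<bar>off i j (b i j)\<bar>)" by (simp add: sum_nonneg)
    ultimately show ?thesis unfolding Ov_def by linarith
  qed
  have Ob: "\<bar>off i' j' (b i' j')\<bar> \<le> Ov" if "i' < r" "j' < m" for i' j'
  proof -
    have "\<bar>off i' j' (b i' j')\<bar> \<le> (\<Sum>i<r. \<Sum>j<m. \<bar>off i j (b i j)\<bar>)"
      using single_le_dsum[of i' r j' m "\<lambda>i j. \<bar>off i j (b i j)\<bar>"] that by simp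
    moreover have "0 \<le> (\<Sum>i<n. \<Sum>j<r. \<bar>off i j (a i j)\<bar>)" by (simp add: sum_nonneg)
    ultimately show ?thesis unfolding Ov_def by linarith
  qed
  have Ov0: "0 \<le> Ov" unfolding Ov_def by (intro add_nonneg_nonneg sum_nonneg) auto
  have M0: "0 \<le> M" using bM[of i j] ij by auto
  have t1: "\<bar>a k i * s k j\<bar> \<le> Sb * Ov" if k: "k < n" for k
  proof (cases "k = j")
    case False
    have Sb0: "0 \<le> Sb" using sB[OF k ij(2)] by linarith
    from False have "s k j = 0" using sD[OF k ij(2)] by auto
    then show ?thesis using Sb0 Ov0 by simp
  next
    case True
    have Sb0: "0 \<le> Sb" using sB[OF k ij(2)] by linarith
    from True have "\<bar>a k i\<bar> \<le> Ov" using Oa[of k i] ij k by (simp add: off_def)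
    then have "\<bar>a k i\<bar> * \<bar>s k j\<bar> \<le> Ov * Sb"
      by (rule mult_mono[OF _ sB[OF k ij(2)]]) (use Ov0 in simp_all)
    then show ?thesis by (simp only: abs_mult mult.commute)
  qed
  have MM: "\<bar>x\<bar> * \<bar>y\<bar> \<le> M * M" if "\<bar>x\<bar> \<le> M" "\<bar>y\<bar> \<le> M" for x y :: real
    by (rule mult_mono[OF that]) (use M0 in simp_all)
  have t2: "\<bar>a k i * a k l * b l j\<bar> \<le> M^2 * Ov" if k: "k < n" and l: "l < r" for k l
  proof -
    have aki: "\<bar>a k i\<bar> \<le> M" using aM ij k by auto
    have akl: "\<bar>a k l\<bar> \<le> M" using aM l k by auto
    have blj: "\<bar>b l j\<bar> \<le> M" using bM ij l by auto
    have e: "\<bar>a k i * a k l * b l j\<bar> = \<bar>a k i\<bar> * \<bar>a k l\<bar> * \<bar>b l j\<bar>" by (simp only: abs_mult)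
    have key: "\<bar>x\<bar> * (\<bar>y\<bar> * \<bar>z\<bar>) \<le> M^2 * Ov" if "\<bar>x\<bar> \<le> Ov" "\<bar>y\<bar> \<le> M" "\<bar>z\<bar> \<le> M" for x y z :: real
    proof -
      have "\<bar>x\<bar> * (\<bar>y\<bar> * \<bar>z\<bar>) \<le> Ov * (M * M)"
        by (rule mult_mono[OF that(1) MM[OF that(2,3)]]) (use Ov0 in simp_all)
      then show ?thesis by (simp add: power2_eq_square mult.commute)
    qed
    consider "k \<noteq> i" | "k = i" "k \<noteq> l" | "k = i" "k = l" "l \<noteq> j" using ij by blast
    then show ?thesis
    proof cases
      case 1
      then have "\<bar>a k i\<bar> \<le> Ov" using Oa[of k i] ij k by (simp add: off_def)
      from key[OF this akl blj] show ?thesis unfolding e by (simp only: mult.assoc)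
    next
      case 2
      then have "\<bar>a k l\<bar> \<le> Ov" using Oa[of k l] l k by (simp add: off_def)
      from key[OF this aki blj] show ?thesis unfolding e by (simp only: mult.assoc mult.left_commute)
    next
      case 3
      then have "\<bar>b l j\<bar> \<le> Ov" using Ob[of l j] ij l by (simp add: off_def)
      from key[OF this aki akl] show ?thesis unfolding e by (simp only: mult.assoc mult.commute)
    qed
  qed
  have eq: "(\<Sum>k<n. a k i * (s k j - (\<Sum>l<r. a k l * b l j)))
      = (\<Sum>k<n. a k i * s k j) - (\<Sum>k<n. \<Sum>l<r. a k i * a k l * b l j)"
    by (simp add: right_diff_distrib sum_subtractf sum_distrib_left mult.assoc)
  have "\<bar>(\<Sum>k<n. a k i * s k j) - (\<Sum>k<n. \<Sum>l<r. a k i * a k l * b l j)\<bar> \<le> (\<Sum>k<n. \<bar>a k i * s k j\<bar>) + (\<Sum>k<n. \<Sum>l<r. \<bar>a k i * a k l * b l j\<bar>)"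
  proof (rule order_trans[OF abs_triangle_ineq4 add_mono])
    show "\<bar>\<Sum>k<n. a k i * s k j\<bar> \<le> (\<Sum>k<n. \<bar>a k i * s k j\<bar>)" by (rule sum_abs)
    have "\<bar>\<Sum>k<n. \<Sum>l<r. a k i * a k l * b l j\<bar> \<le> (\<Sum>k<n. \<bar>\<Sum>l<r. a k i * a k l * b l j\<bar>)" by (rule sum_abs)
    also have "\<dots> \<le> (\<Sum>k<n. \<Sum>l<r. \<bar>a k i * a k l * b l j\<bar>)" by (intro sum_mono sum_abs)
    finally show "\<bar>\<Sum>k<n. \<Sum>l<r. a k i * a k l * b l j\<bar> \<le> (\<Sum>k<n. \<Sum>l<r. \<bar>a k i * a k l * b l j\<bar>)" .
  qed
  also have "\<dots> \<le> (\<Sum>k<n. Sb * Ov) + (\<Sum>k<n. \<Sum>l<r. M^2 * Ov)"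
    by (intro add_mono sum_mono t1 t2) auto
  also have "\<dots> = real n * (Sb + real r * M^2) * Ov" by (simp add: algebra_simps)
  finally show ?thesis unfolding eq .
qed


lemma deriv_bound:
  fixes a b da db :: "nat \<Rightarrow> nat \<Rightarrow> real" and n r m :: nat
  defines "Ov \<equiv> (\<Sum>i<n. \<Sum>j<r. \<bar>off i j (a i j)\<bar>) + (\<Sum>i<r. \<Sum>j<m. \<bar>off i j (b i j)\<bar>)"
  assumes L: "0 \<le> L"
    and da: "\<And>i j. i < n \<Longrightarrow> j < r \<Longrightarrow> i \<noteq> j \<Longrightarrow> \<bar>da i j\<bar> \<le> L * Ov"
    and db: "\<And>i j. i < r \<Longrightarrow> j < m \<Longrightarrow> i \<noteq> j \<Longrightarrow> \<bar>db i j\<bar> \<le> L * Ov"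
  shows "(\<Sum>i<n. \<Sum>j<r. 2 * off i j (a i j) * da i j) + (\<Sum>i<r. \<Sum>j<m. 2 * off i j (b i j) * db i j)
     \<le> 4 * L * (real n * real r + real r * real m) *
        ((\<Sum>i<n. \<Sum>j<r. (off i j (a i j))^2) + (\<Sum>i<r. \<Sum>j<m. (off i j (b i j))^2))"
proof -
  define Oa where "Oa = (\<Sum>i<n. \<Sum>j<r. \<bar>off i j (a i j)\<bar>)"
  define Ob where "Ob = (\<Sum>i<r. \<Sum>j<m. \<bar>off i j (b i j)\<bar>)"
  define Ea where "Ea = (\<Sum>i<n. \<Sum>j<r. (off i j (a i j))^2)"
  define Eb where "Eb = (\<Sum>i<r. \<Sum>j<m. (off i j (b i j))^2)"
  have Ov0: "0 \<le> Ov" unfolding Ov_def by (intro add_nonneg_nonneg sum_nonneg) auto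
  have ta: "2 * off i j (a i j) * da i j \<le> 2 * L * Ov * \<bar>off i j (a i j)\<bar>" if "i < n" "j < r" for i j
  proof (cases "i = j")
    case True then show ?thesis using L Ov0 by (simp add: off_def)
  next
    case False
    have "2 * off i j (a i j) * da i j \<le> \<bar>2 * off i j (a i j) * da i j\<bar>" by simp
    also have "\<dots> = 2 * \<bar>off i j (a i j)\<bar> * \<bar>da i j\<bar>" by (simp add: abs_mult)
    also have "\<dots> \<le> 2 * \<bar>off i j (a i j)\<bar> * (L * Ov)"
      by (intro mult_left_mono da that False) auto
    finally show ?thesis by (simp add: algebra_simps)
  qed
  have tb: "2 * off i j (b i j) * db i j \<le> 2 * L * Ov * \<bar>off i j (b i j)\<bar>" if "i < r" "j < m" for i j
  proof (cases "i = j")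
    case True then show ?thesis using L Ov0 by (simp add: off_def)
  next
    case False
    have "2 * off i j (b i j) * db i j \<le> \<bar>2 * off i j (b i j) * db i j\<bar>" by simp
    also have "\<dots> = 2 * \<bar>off i j (b i j)\<bar> * \<bar>db i j\<bar>" by (simp add: abs_mult)
    also have "\<dots> \<le> 2 * \<bar>off i j (b i j)\<bar> * (L * Ov)"
      by (intro mult_left_mono db that False) auto
    finally show ?thesis by (simp add: algebra_simps)
  qed
  have "(\<Sum>i<n. \<Sum>j<r. 2 * off i j (a i j) * da i j) + (\<Sum>i<r. \<Sum>j<m. 2 * off i j (b i j) * db i j)
      \<le> (\<Sum>i<n. \<Sum>j<r. 2 * L * Ov * \<bar>off i j (a i j)\<bar>) + (\<Sum>i<r. \<Sum>j<m. 2 * L * Ov * \<bar>off i j (b i j)\<bar>)"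
    by (intro add_mono sum_mono ta tb) auto
  also have "\<dots> = 2 * L * Ov * Ov" unfolding Ov_def by (simp add: sum_distrib_left algebra_simps)
  also have "\<dots> \<le> 2 * L * (2 * Oa^2 + 2 * Ob^2)"
  proof -
    have OO: "Ov = Oa + Ob" by (simp add: Ov_def Oa_def Ob_def)
    have e2: "(Oa + Ob)^2 + (Oa - Ob)^2 = 2 * Oa^2 + 2 * Ob^2" by (simp add: power2_sum power2_diff)
    have "0 \<le> (Oa - Ob)^2" by simp
    then have "Ov * Ov \<le> 2 * Oa^2 + 2 * Ob^2" using e2 unfolding OO power2_eq_square[symmetric] by linarith
    then show ?thesis using L by (simp add: mult_left_mono mult.assoc)
  qed
  also have "\<dots> \<le> 2 * L * (2 * (real n * real r * Ea) + 2 * (real r * real m * Eb))"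
    using cs_dsum[where f="\<lambda>i j. off i j (a i j)" and p=n and q=r] cs_dsum[where f="\<lambda>i j. off i j (b i j)" and p=r and q=m] L
    unfolding Oa_def Ob_def Ea_def Eb_def by (intro mult_left_mono add_mono) auto
  also have "\<dots> \<le> 4 * L * (real n * real r + real r * real m) * (Ea + Eb)"
  proof -
    have "Ea \<ge> 0" "Eb \<ge> 0" unfolding Ea_def Eb_def by (auto intro!: sum_nonneg)
    then have "real n * real r * Ea + real r * real m * Eb \<le> (real n * real r + real r * real m) * (Ea + Eb)"
      by (simp add: algebra_simps)
    then have "(4 * L) * (real n * real r * Ea + real r * real m * Eb) \<le> (4 * L) * ((real n * real r + real r * real m) * (Ea + Eb))"
      using L by (intro mult_left_mono) auto
    then show ?thesis by (simp add: algebra_simps)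
  qed
  finally show ?thesis unfolding Ea_def Eb_def .
qed


lemma off_sq_deriv:
  assumes "(f has_real_derivative f') (at t within S)"
  shows "((\<lambda>s. (off i j (f s))^2) has_real_derivative 2 * off i j (f t) * f') (at t within S)"
proof (cases "i = j")
  case True then show ?thesis by (simp add: off_def)
next
  case False
  show ?thesis using False
    by (simp add: off_def) (rule derivative_eq_intros assms refl | simp)+
qed

lemma sum_single:
  fixes f :: "nat \<Rightarrow> real"
  assumes "i < p" "\<And>k. k < p \<Longrightarrow> k \<noteq> i \<Longrightarrow> f k = 0"
  shows "(\<Sum>k<p. f k) = f i"
proof -
  have "(\<Sum>k<p. f k) = f i + (\<Sum>k\<in>{..<p} - {i}. f k)"
    using assms(1) by (simp add: sum.remove)
  also have "(\<Sum>k\<in>{..<p} - {i}. f k) = 0" using assms(2) by (intro sum.neutral) auto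
  finally show ?thesis by simp
qed

lemma dsum_zero_each:
  fixes f :: "nat \<Rightarrow> nat \<Rightarrow> real"
  assumes "(\<Sum>i<p. \<Sum>j<q. (f i j)^2) = 0" "i < p" "j < q"
  shows "f i j = 0"
proof -
  have "\<forall>i\<in>{..<p}. (\<Sum>j<q. (f i j)^2) = 0"
    using assms(1) by (subst sum_nonneg_eq_0_iff[symmetric]) (auto intro: sum_nonneg)
  then have "(\<Sum>j<q. (f i j)^2) = 0" using assms(2) by auto
  then have "\<forall>j\<in>{..<q}. (f i j)^2 = 0" by (subst sum_nonneg_eq_0_iff[symmetric]) auto
  then show ?thesis using assms(3) by auto
qed

locale flow =
  fixes n m r :: nat and A B :: "real \<Rightarrow> real mat" and S :: "real mat"
  assumes dA: "mat_deriv_on n r A (\<lambda>t. (S - A t * B t) * (B t)\<^sup>T)"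
    and dB: "mat_deriv_on r m B (\<lambda>t. (A t)\<^sup>T * (S - A t * B t))"
    and Sc: "S \<in> carrier_mat n m" and Sd: "diagonal_mat S"
begin

definition da where "da t i j = (\<Sum>k<m. (S $$ (i,k) - (\<Sum>l<r. A t $$ (i,l) * B t $$ (l,k))) * B t $$ (j,k))"
definition db where "db t i j = (\<Sum>k<n. A t $$ (k,i) * (S $$ (k,j) - (\<Sum>l<r. A t $$ (k,l) * B t $$ (l,j))))"

lemma Ac: "0 \<le> t \<Longrightarrow> A t \<in> carrier_mat n r" using dA by (auto simp: mat_deriv_on_def)
lemma Bc: "0 \<le> t \<Longrightarrow> B t \<in> carrier_mat r m" using dB by (auto simp: mat_deriv_on_def)

lemma derA:
  assumes "0 \<le> t" "i < n" "j < r"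
  shows "((\<lambda>s. A s $$ (i,j)) has_real_derivative da t i j) (at t within {0..})"
proof -
  have "((\<lambda>s. A s $$ (i,j)) has_real_derivative ((S - A t * B t) * (B t)\<^sup>T) $$ (i,j)) (at t within {0..})"
    using dA assms by (auto simp: mat_deriv_on_def)
  moreover have "((S - A t * B t) * (B t)\<^sup>T) $$ (i,j) = da t i j"
    using Ac[OF assms(1)] Bc[OF assms(1)] Sc assms
    by (simp add: da_def scalar_prod_def atLeast0LessThan)
  ultimately show ?thesis by simp
qed

lemma derB:
  assumes "0 \<le> t" "i < r" "j < m"
  shows "((\<lambda>s. B s $$ (i,j)) has_real_derivative db t i j) (at t within {0..})"
proof -
  have "((\<lambda>s. B s $$ (i,j)) has_real_derivative ((A t)\<^sup>T * (S - A t * B t)) $$ (i,j)) (at t within {0..})"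
    using dB assms by (auto simp: mat_deriv_on_def)
  moreover have "((A t)\<^sup>T * (S - A t * B t)) $$ (i,j) = db t i j"
    using Ac[OF assms(1)] Bc[OF assms(1)] Sc assms
    by (simp add: db_def scalar_prod_def atLeast0LessThan)
  ultimately show ?thesis by simp
qed

lemma contA: "i < n \<Longrightarrow> j < r \<Longrightarrow> continuous_on {0..} (\<lambda>s. A s $$ (i,j))"
  by (rule DERIV_continuous_on[of _ _ "\<lambda>t. da t i j"]) (auto intro: derA)
lemma contB: "i < r \<Longrightarrow> j < m \<Longrightarrow> continuous_on {0..} (\<lambda>s. B s $$ (i,j))"
  by (rule DERIV_continuous_on[of _ _ "\<lambda>t. db t i j"]) (auto intro: derB)

lemma offdiag_zero:
  assumes A0: "A 0 = 0\<^sub>m n r" and B0: "diagonal_mat (B 0)"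
  assumes t: "0 \<le> t"
  shows "(\<forall>i<n. \<forall>j<r. i \<noteq> j \<longrightarrow> A t $$ (i,j) = 0) \<and> (\<forall>i<r. \<forall>j<m. i \<noteq> j \<longrightarrow> B t $$ (i,j) = 0)"
proof -
  define E where "E t = (\<Sum>i<n. \<Sum>j<r. (off i j (A t $$ (i,j)))^2) + (\<Sum>i<r. \<Sum>j<m. (off i j (B t $$ (i,j)))^2)" for t
  define E' where "E' t = (\<Sum>i<n. \<Sum>j<r. 2 * off i j (A t $$ (i,j)) * da t i j) + (\<Sum>i<r. \<Sum>j<m. 2 * off i j (B t $$ (i,j)) * db t i j)" for t
  have dE: "(E has_real_derivative E' t) (at t within {0..})" if "0 \<le> t" for t
    unfolding E_def E'_def
    by (intro DERIV_add DERIV_sum off_sq_deriv derA derB that) auto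
  have Epos: "0 \<le> E t" for t unfolding E_def by (intro add_nonneg_nonneg sum_nonneg) auto
  have E0: "E 0 = 0"
  proof -
    have "off i j (A 0 $$ (i,j)) = 0" if "i < n" "j < r" for i j using that A0 by (simp add: off_def)
    moreover have "off i j (B 0 $$ (i,j)) = 0" if "i < r" "j < m" for i j
      using that B0 Bc[of 0] by (auto simp: off_def diagonal_mat_def)
    ultimately show ?thesis unfolding E_def by simp
  qed
  have K: "\<exists>K. \<forall>t. 0 \<le> t \<and> t \<le> T \<longrightarrow> E' t \<le> K * E t" if T: "0 \<le> T" for T
  proof -
    define G where "G t = (\<Sum>i<n. \<Sum>j<r. \<bar>A t $$ (i,j)\<bar>) + (\<Sum>i<r. \<Sum>j<m. \<bar>B t $$ (i,j)\<bar>)" for t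
    have "continuous_on {0..} G" unfolding G_def
      by (intro continuous_intros contA contB) auto
    then have "continuous_on {0..T} G" by (rule continuous_on_subset) auto
    then obtain tm where tm: "\<forall>y\<in>{0..T}. G y \<le> G tm"
      using continuous_attains_sup[of "{0..T}" G] T by auto
    define M where "M = G tm"
    define Sb where "Sb = (\<Sum>i<n. \<Sum>k<m. \<bar>S $$ (i,k)\<bar>)"
    define L where "L = (real n + real m) * (Sb + real r * M^2)"
    have Sb0: "0 \<le> Sb" unfolding Sb_def by (intro sum_nonneg) auto
    have L0: "0 \<le> L" unfolding L_def using Sb0 by auto
    have sB: "\<bar>S $$ (i,k)\<bar> \<le> Sb" if "i < n" "k < m" for i k
      unfolding Sb_def using single_le_dsum[of i n k m "\<lambda>i k. \<bar>S $$ (i,k)\<bar>"] that by simp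
    have sD: "S $$ (i,k) = 0" if "i < n" "k < m" "i \<noteq> k" for i k
      using Sd Sc that by (auto simp: diagonal_mat_def)
    show ?thesis
    proof (intro exI[of _ "4 * L * (real n * real r + real r * real m)"] allI impI)
      fix t assume tT: "0 \<le> t \<and> t \<le> T"
      have GM: "G t \<le> M" using tm tT by (auto simp: M_def)
      have aM: "\<bar>A t $$ (i,j)\<bar> \<le> M" if "i < n" "j < r" for i j
      proof -
        have "\<bar>A t $$ (i,j)\<bar> \<le> (\<Sum>i<n. \<Sum>j<r. \<bar>A t $$ (i,j)\<bar>)"
          using single_le_dsum[of i n j r "\<lambda>i j. \<bar>A t $$ (i,j)\<bar>"] that by simp
        moreover have "0 \<le> (\<Sum>i<r. \<Sum>j<m. \<bar>B t $$ (i,j)\<bar>)" by (intro sum_nonneg) auto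
        ultimately show ?thesis using GM unfolding G_def by linarith
      qed
      have bM: "\<bar>B t $$ (i,j)\<bar> \<le> M" if "i < r" "j < m" for i j
      proof -
        have "\<bar>B t $$ (i,j)\<bar> \<le> (\<Sum>i<r. \<Sum>j<m. \<bar>B t $$ (i,j)\<bar>)"
          using single_le_dsum[of i r j m "\<lambda>i j. \<bar>B t $$ (i,j)\<bar>"] that by simp
        moreover have "0 \<le> (\<Sum>i<n. \<Sum>j<r. \<bar>A t $$ (i,j)\<bar>)" by (intro sum_nonneg) auto
        ultimately show ?thesis using GM unfolding G_def by linarith
      qed
      define Ov where "Ov = (\<Sum>i<n. \<Sum>j<r. \<bar>off i j (A t $$ (i,j))\<bar>) + (\<Sum>i<r. \<Sum>j<m. \<bar>off i j (B t $$ (i,j))\<bar>)"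
      have Ov0: "0 \<le> Ov" unfolding Ov_def by (intro add_nonneg_nonneg sum_nonneg) auto
      have c0: "0 \<le> Sb + real r * M^2" using Sb0 by auto
      have bda: "\<bar>da t i j\<bar> \<le> L * Ov" if "i < n" "j < r" "i \<noteq> j" for i j
      proof -
        have "\<bar>da t i j\<bar> \<le> real m * (Sb + real r * M^2) * Ov"
          unfolding da_def Ov_def
          by (rule da_bound[where a="\<lambda>i j. A t $$ (i,j)" and b="\<lambda>i j. B t $$ (i,j)" and s="\<lambda>i k. S $$ (i,k)"])
             (use aM bM sB sD that in auto)
        also have "\<dots> \<le> L * Ov" unfolding L_def
          by (intro mult_right_mono Ov0) (use c0 in \<open>auto intro: mult_right_mono\<close>)
        finally show ?thesis .
      qed
      have bdb: "\<bar>db t i j\<bar> \<le> L * Ov" if "i < r" "j < m" "i \<noteq> j" for i j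
      proof -
        have "\<bar>db t i j\<bar> \<le> real n * (Sb + real r * M^2) * Ov"
          unfolding db_def Ov_def
          by (rule db_bound[where a="\<lambda>i j. A t $$ (i,j)" and b="\<lambda>i j. B t $$ (i,j)" and s="\<lambda>i k. S $$ (i,k)"])
             (use aM bM sB sD that in auto)
        also have "\<dots> \<le> L * Ov" unfolding L_def
          by (intro mult_right_mono Ov0) (use c0 in \<open>auto intro: mult_right_mono\<close>)
        finally show ?thesis .
      qed
      show "E' t \<le> 4 * L * (real n * real r + real r * real m) * E t"
        unfolding E'_def E_def
        by (rule deriv_bound[where a="\<lambda>i j. A t $$ (i,j)" and b="\<lambda>i j. B t $$ (i,j)" and da="da t" and db="db t"])
           (use L0 bda bdb in \<open>auto simp: Ov_def\<close>)
    qed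
  qed
  have "E t = 0" by (rule gronwall0[OF dE E0 Epos K t]) auto
  then have Ea: "(\<Sum>i<n. \<Sum>j<r. (off i j (A t $$ (i,j)))^2) = 0"
    and Eb: "(\<Sum>i<r. \<Sum>j<m. (off i j (B t $$ (i,j)))^2) = 0"
    unfolding E_def by (smt (verit) sum_nonneg zero_le_power2)+
  show ?thesis
  proof (intro conjI allI impI)
    fix i j assume "i < n" "j < r" "i \<noteq> j"
    then show "A t $$ (i,j) = 0" using dsum_zero_each[OF Ea, of i j] by (simp add: off_def)
  next
    fix i j assume "i < r" "j < m" "i \<noteq> j"
    then show "B t $$ (i,j) = 0" using dsum_zero_each[OF Eb, of i j] by (simp add: off_def)
  qed
qed

lemma diag_limit:
  assumes A0: "A 0 = 0\<^sub>m n r" and B0: "diagonal_mat (B 0)"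
    and rn: "r < n" and rm: "r < m" and i: "i < r" and nz: "B 0 $$ (i,i) \<noteq> 0"
  shows "((\<lambda>t. A t $$ (i,i) * B t $$ (i,i)) \<longlongrightarrow> S $$ (i,i)) at_top"
proof (rule scalar_conv)
  have inner: "(\<Sum>l<r. A t $$ (i,l) * B t $$ (l,k)) = A t $$ (i,i) * B t $$ (i,k)" if t: "0 \<le> t" for t k
    using offdiag_zero[OF A0 B0 t] i rn by (intro sum_single) auto
  fix t :: real assume t: "0 \<le> t"
  note OD = offdiag_zero[OF A0 B0 t]
  have "da t i i = (\<Sum>k<m. (S $$ (i,k) - A t $$ (i,i) * B t $$ (i,k)) * B t $$ (i,k))"
    unfolding da_def using inner[OF t] by simp
  also have "\<dots> = (S $$ (i,i) - A t $$ (i,i) * B t $$ (i,i)) * B t $$ (i,i)"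
    using OD i rm by (intro sum_single) auto
  finally have e1: "da t i i = (S $$ (i,i) - A t $$ (i,i) * B t $$ (i,i)) * B t $$ (i,i)" .
  have "db t i i = (\<Sum>k<n. A t $$ (k,i) * (S $$ (k,i) - (\<Sum>l<r. A t $$ (k,l) * B t $$ (l,i))))"
    unfolding db_def by simp
  also have "\<dots> = A t $$ (i,i) * (S $$ (i,i) - (\<Sum>l<r. A t $$ (i,l) * B t $$ (l,i)))"
    using OD i rn by (intro sum_single) auto
  also have "\<dots> = A t $$ (i,i) * (S $$ (i,i) - A t $$ (i,i) * B t $$ (i,i))"
    using inner[OF t] by simp
  finally have e2: "db t i i = A t $$ (i,i) * (S $$ (i,i) - A t $$ (i,i) * B t $$ (i,i))" .
  show "((\<lambda>s. A s $$ (i,i)) has_real_derivative (S $$ (i,i) - A t $$ (i,i) * B t $$ (i,i)) * B t $$ (i,i)) (at t within {0..})"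
    using derA[OF t, of i i] i rn e1 by simp
  show "((\<lambda>s. B s $$ (i,i)) has_real_derivative A t $$ (i,i) * (S $$ (i,i) - A t $$ (i,i) * B t $$ (i,i))) (at t within {0..})"
    using derB[OF t, of i i] i rm e2 by simp
next
  show "A 0 $$ (i,i) = 0" using A0 i rn by simp
  show "B 0 $$ (i,i) \<noteq> 0" by (rule nz)
qed

end


lemma orthD:
  assumes "orth_mat p Q"
  shows "Q \<in> carrier_mat p p" "Q\<^sup>T \<in> carrier_mat p p" "Q\<^sup>T * Q = 1\<^sub>m p" "Q * Q\<^sup>T = 1\<^sub>m p"
  using assms by (auto simp: orth_mat_def)

lemma alg:
  fixes U V S Yv Xv :: "real mat"
  assumes U: "orth_mat n U" and V: "orth_mat m V" and Yc: "Yv \<in> carrier_mat n r" and Xc: "Xv \<in> carrier_mat r m"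
    and Sc: "S \<in> carrier_mat n m" and W: "W0 = U * S * V\<^sup>T"
  shows "Yv = U * (U\<^sup>T * Yv)" "Xv = (Xv * V) * V\<^sup>T"
    "W0 - Yv * Xv = U * (S - (U\<^sup>T * Yv) * (Xv * V)) * V\<^sup>T"
    "U\<^sup>T * ((W0 - Yv * Xv) * Xv\<^sup>T) = (S - (U\<^sup>T * Yv) * (Xv * V)) * (Xv * V)\<^sup>T"
    "(Yv\<^sup>T * (W0 - Yv * Xv)) * V = (U\<^sup>T * Yv)\<^sup>T * (S - (U\<^sup>T * Yv) * (Xv * V))"
proof -
  note u = orthD[OF U] and v = orthD[OF V]
  define Av where "Av = U\<^sup>T * Yv"
  define Bv where "Bv = Xv * V"
  define R where "R = S - Av * Bv"
  have Ac: "Av \<in> carrier_mat n r" unfolding Av_def using u Yc by auto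
  have Bc: "Bv \<in> carrier_mat r m" unfolding Bv_def using v Xc by auto
  have Rc: "R \<in> carrier_mat n m" unfolding R_def using Ac Bc Sc by auto
  have Y: "Yv = U * Av"
  proof -
    have "U * Av = (U * U\<^sup>T) * Yv" unfolding Av_def using u Yc by (simp add: assoc_mult_mat[of U n n _ n Yv r, symmetric])
    also have "\<dots> = Yv" using u Yc by simp
    finally show ?thesis by simp
  qed
  have X: "Xv = Bv * V\<^sup>T"
  proof -
    have "Bv * V\<^sup>T = Xv * (V * V\<^sup>T)" unfolding Bv_def using v Xc by (simp add: assoc_mult_mat[of Xv r m V m _ m])
    also have "\<dots> = Xv" using v Xc by simp
    finally show ?thesis by simp
  qed
  have YX: "Yv * Xv = U * (Av * Bv) * V\<^sup>T"
  proof -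
    have "Yv * Xv = (U * Av) * (Bv * V\<^sup>T)" using Y X by simp
    also have "\<dots> = U * (Av * (Bv * V\<^sup>T))" using u v Ac Bc by (simp add: assoc_mult_mat[of U n n Av r _ m])
    also have "\<dots> = U * ((Av * Bv) * V\<^sup>T)" using u v Ac Bc by (simp add: assoc_mult_mat[of Av n r Bv m _ m])
    also have "\<dots> = U * (Av * Bv) * V\<^sup>T" using u v Ac Bc by (simp add: assoc_mult_mat[of U n n "Av * Bv" m _ m])
    finally show ?thesis .
  qed
  have WR: "W0 - Yv * Xv = U * R * V\<^sup>T"
  proof -
    have "U * R = U * S - U * (Av * Bv)" unfolding R_def using u Sc Ac Bc by (simp add: mult_minus_distrib_mat[of U n n])
    then have "U * R * V\<^sup>T = U * S * V\<^sup>T - U * (Av * Bv) * V\<^sup>T"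
      using u v Sc Ac Bc by (simp add: minus_mult_distrib_mat[of _ n m])
    then show ?thesis using W YX by simp
  qed
  have XT: "Xv\<^sup>T = V * Bv\<^sup>T" using X v Bc by (simp add: transpose_mult[of Bv r m])
  have YT: "Yv\<^sup>T = Av\<^sup>T * U\<^sup>T" using Y u Ac by (simp add: transpose_mult[of U n n])
  have VV: "V\<^sup>T * (V * Z) = Z" if "Z \<in> carrier_mat m k" for Z k
  proof -
    have "V\<^sup>T * (V * Z) = (V\<^sup>T * V) * Z" by (rule assoc_mult_mat[symmetric, of _ m m _ m _ k]) (use v that in auto)
    then show ?thesis using v that by simp
  qed
  have UUl: "U\<^sup>T * (U * Z) = Z" if "Z \<in> carrier_mat n k" for Z k
  proof -
    have "U\<^sup>T * (U * Z) = (U\<^sup>T * U) * Z" by (rule assoc_mult_mat[symmetric, of _ n n _ n _ k]) (use u that in auto)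
    then show ?thesis using u that by simp
  qed
  have D1: "U\<^sup>T * ((W0 - Yv * Xv) * Xv\<^sup>T) = R * Bv\<^sup>T"
  proof -
    have "U\<^sup>T * ((W0 - Yv * Xv) * Xv\<^sup>T) = U\<^sup>T * ((U * R * V\<^sup>T) * (V * Bv\<^sup>T))" using WR XT by simp
    also have "(U * R * V\<^sup>T) * (V * Bv\<^sup>T) = (U * R) * (V\<^sup>T * (V * Bv\<^sup>T))"
      by (rule assoc_mult_mat[of _ n m _ m _ r]) (use u v Rc Bc in auto)
    also have "V\<^sup>T * (V * Bv\<^sup>T) = Bv\<^sup>T" by (rule VV[of _ r]) (use Bc in auto)
    also have "(U * R) * Bv\<^sup>T = U * (R * Bv\<^sup>T)"
      by (rule assoc_mult_mat[of _ n n _ m _ r]) (use u v Rc Bc in auto)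
    also have "U\<^sup>T * (U * (R * Bv\<^sup>T)) = R * Bv\<^sup>T" by (rule UUl[of _ r]) (use Rc Bc in auto)
    finally show ?thesis .
  qed
  have D2: "(Yv\<^sup>T * (W0 - Yv * Xv)) * V = Av\<^sup>T * R"
  proof -
    have "(Yv\<^sup>T * (W0 - Yv * Xv)) * V = ((Av\<^sup>T * U\<^sup>T) * (U * R * V\<^sup>T)) * V" using WR YT by simp
    also have "(Av\<^sup>T * U\<^sup>T) * (U * R * V\<^sup>T) = Av\<^sup>T * (U\<^sup>T * (U * R * V\<^sup>T))"
      by (rule assoc_mult_mat[of _ r n _ n _ m]) (use u v Rc Ac in auto)
    also have "U * R * V\<^sup>T = U * (R * V\<^sup>T)"
      by (rule assoc_mult_mat[of _ n n _ m _ m]) (use u v Rc in auto)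
    also have "U\<^sup>T * (U * (R * V\<^sup>T)) = R * V\<^sup>T" by (rule UUl[of _ m]) (use Rc v in auto)
    also have "Av\<^sup>T * (R * V\<^sup>T) * V = Av\<^sup>T * ((R * V\<^sup>T) * V)"
      by (rule assoc_mult_mat[of _ r n _ m _ m]) (use u v Rc Ac in auto)
    also have "(R * V\<^sup>T) * V = R * (V\<^sup>T * V)"
      by (rule assoc_mult_mat[of _ n m _ m _ m]) (use v Rc in auto)
    also have "R * (V\<^sup>T * V) = R" using v Rc by simp
    finally show ?thesis .
  qed
  show "Yv = U * (U\<^sup>T * Yv)" using Y by (simp add: Av_def)
  show "Xv = (Xv * V) * V\<^sup>T" using X by (simp add: Bv_def)
  show "W0 - Yv * Xv = U * (S - (U\<^sup>T * Yv) * (Xv * V)) * V\<^sup>T" using WR by (simp add: R_def Av_def Bv_def)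
  show "U\<^sup>T * ((W0 - Yv * Xv) * Xv\<^sup>T) = (S - (U\<^sup>T * Yv) * (Xv * V)) * (Xv * V)\<^sup>T" using D1 by (simp add: R_def Av_def Bv_def)
  show "(Yv\<^sup>T * (W0 - Yv * Xv)) * V = (U\<^sup>T * Yv)\<^sup>T * (S - (U\<^sup>T * Yv) * (Xv * V))" using D2 by (simp add: R_def Av_def Bv_def)
qed


lemma mat_deriv_cong:
  assumes "mat_deriv_on p q F F'" "\<And>t. 0 \<le> t \<Longrightarrow> F' t = G' t"
  shows "mat_deriv_on p q F G'"
  using assms unfolding mat_deriv_on_def by auto

theorem theorem2p11:
  fixes n m r :: nat
    and W0 U V \<Sigma>0 Xt0 :: "real mat"
    and Y X :: "real \<Rightarrow> real mat"
  assumes W0_dim: "W0 \<in> carrier_mat n m"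
    and r_pos: "1 \<le> r"
    and r_rank: "r < vec_space.rank n W0"
    and U_orth: "orth_mat n U"
    and V_orth: "orth_mat m V"
    and Sigma_dim: "\<Sigma>0 \<in> carrier_mat n m"
    and Sigma_diag: "diagonal_mat \<Sigma>0"
    and Sigma_sorted: "\<forall>i j. i \<le> j \<longrightarrow> j < min n m \<longrightarrow> \<Sigma>0 $$ (j,j) \<le> \<Sigma>0 $$ (i,i)"
    and Sigma_nonneg: "\<forall>i < min n m. 0 \<le> \<Sigma>0 $$ (i,i)"
    and svd: "W0 = U * \<Sigma>0 * V\<^sup>T"
    and Xt0_dim: "Xt0 \<in> carrier_mat r m"
    and Xt0_diag: "diagonal_mat Xt0"
    and Xt0_nz: "\<forall>i < r. Xt0 $$ (i,i) \<noteq> 0"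
    and gd_bounded: "\<exists>eta0 > 0. \<exists>C. \<forall>eta. 0 < eta \<and> eta \<le> eta0 \<longrightarrow>
        (\<forall>k. frob2 (fst (lora_gd W0 eta (0\<^sub>m n r) (Xt0 * V\<^sup>T) k)) +
             frob2 (snd (lora_gd W0 eta (0\<^sub>m n r) (Xt0 * V\<^sup>T) k)) \<le> C)"
    and Y_ode: "mat_deriv_on n r Y (\<lambda>t. (W0 - Y t * X t) * (X t)\<^sup>T)"
    and X_ode: "mat_deriv_on r m X (\<lambda>t. (Y t)\<^sup>T * (W0 - Y t * X t))"
    and Y_init: "Y 0 = 0\<^sub>m n r"
    and X_init: "X 0 = Xt0 * V\<^sup>T"
  shows "mat_tendsto_at_top n m (\<lambda>t. Y t * X t)
           (mat n m (\<lambda>(a,b). \<Sum>i<r. \<Sigma>0 $$ (i,i) * U $$ (a,i) * V $$ (b,i)))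
       \<and> ((\<lambda>t. frob2 (W0 - Y t * X t)) \<longlongrightarrow> (\<Sum>i\<in>{r..<min n m}. (\<Sigma>0 $$ (i,i))^2)) at_top"
proof -
  note u = orthD[OF U_orth] and v = orthD[OF V_orth]
  have rn: "r < n" using r_rank rank_le_nr'[OF W0_dim] by linarith
  have rm: "r < m" using r_rank rank_le_nc'[OF W0_dim] by linarith
  have Yc: "Y t \<in> carrier_mat n r" if "0 \<le> t" for t using Y_ode that by (auto simp: mat_deriv_on_def)
  have Xc: "X t \<in> carrier_mat r m" if "0 \<le> t" for t using X_ode that by (auto simp: mat_deriv_on_def)
  define At where "At t = U\<^sup>T * Y t" for t
  define Bt where "Bt t = X t * V" for t
  note al = alg[OF U_orth V_orth Yc Xc Sigma_dim svd]
  have dA: "mat_deriv_on n r At (\<lambda>t. (\<Sigma>0 - At t * Bt t) * (Bt t)\<^sup>T)"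
  proof -
    have "At = (\<lambda>t. U\<^sup>T * Y t)" by (rule ext) (simp add: At_def)
    moreover have "mat_deriv_on n r (\<lambda>t. U\<^sup>T * Y t) (\<lambda>t. (\<Sigma>0 - At t * Bt t) * (Bt t)\<^sup>T)"
    proof (rule mat_deriv_cong[OF mat_deriv_left[OF Y_ode u(2)]])
      fix t :: real assume t: "0 \<le> t"
      show "U\<^sup>T * ((W0 - Y t * X t) * (X t)\<^sup>T) = (\<Sigma>0 - At t * Bt t) * (Bt t)\<^sup>T"
        using al(4)[OF t t] by (simp add: At_def Bt_def)
    qed
    ultimately show ?thesis by simp
  qed
  have dB: "mat_deriv_on r m Bt (\<lambda>t. (At t)\<^sup>T * (\<Sigma>0 - At t * Bt t))"
  proof -
    have "Bt = (\<lambda>t. X t * V)" by (rule ext) (simp add: Bt_def)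
    moreover have "mat_deriv_on r m (\<lambda>t. X t * V) (\<lambda>t. (At t)\<^sup>T * (\<Sigma>0 - At t * Bt t))"
    proof (rule mat_deriv_cong[OF mat_deriv_right[OF X_ode v(1)]])
      fix t :: real assume t: "0 \<le> t"
      show "((Y t)\<^sup>T * (W0 - Y t * X t)) * V = (At t)\<^sup>T * (\<Sigma>0 - At t * Bt t)"
        using al(5)[OF t t] by (simp add: At_def Bt_def)
    qed
    ultimately show ?thesis by simp
  qed
  interpret fl: flow n m r At Bt \<Sigma>0
    by unfold_locales (fact dA, fact dB, fact Sigma_dim, fact Sigma_diag)
  have A0: "At 0 = 0\<^sub>m n r" unfolding At_def Y_init using u by simp
  have B0e: "Bt 0 = Xt0"
  proof -
    have "Bt 0 = Xt0 * (V\<^sup>T * V)" unfolding Bt_def X_init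
      by (rule assoc_mult_mat[of _ r m _ m _ m]) (use v Xt0_dim in auto)
    then show ?thesis using v Xt0_dim by simp
  qed
  have B0: "diagonal_mat (Bt 0)" using B0e Xt0_diag by simp
  note OD = fl.offdiag_zero[OF A0 B0]
  define p where "p t i = At t $$ (i,i) * Bt t $$ (i,i)" for t i
  have lim_p: "((\<lambda>t. p t i) \<longlongrightarrow> \<Sigma>0 $$ (i,i)) at_top" if "i < r" for i
    unfolding p_def by (rule fl.diag_limit[OF A0 B0 rn rm that]) (use B0e Xt0_nz that in auto)
  have Atc: "At t \<in> carrier_mat n r" if "0 \<le> t" for t using fl.Ac[OF that] .
  have Btc: "Bt t \<in> carrier_mat r m" if "0 \<le> t" for t using fl.Bc[OF that] .
  have P: "(At t * Bt t) $$ (i,j) = (if i = j \<and> i < r then p t i else 0)"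
    if t: "0 \<le> t" and ij: "i < n" "j < m" for t i j
  proof -
    have "(At t * Bt t) $$ (i,j) = (\<Sum>l<r. At t $$ (i,l) * Bt t $$ (l,j))"
      by (rule mult_entry[OF Atc[OF t] Btc[OF t] ij])
    also have "\<dots> = (if i = j \<and> i < r then p t i else 0)"
    proof (cases "i < r")
      case True
      have "(\<Sum>l<r. At t $$ (i,l) * Bt t $$ (l,j)) = At t $$ (i,i) * Bt t $$ (i,j)"
        using OD[OF t] True ij by (intro sum_single) auto
      then show ?thesis using OD[OF t] True ij by (auto simp: p_def)
    next
      case False
      have "(\<Sum>l<r. At t $$ (i,l) * Bt t $$ (l,j)) = 0"
        using OD[OF t] False ij by (intro sum.neutral) auto
      then show ?thesis using False by simp
    qed
    finally show ?thesis .
  qed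
  have YX: "(Y t * X t) $$ (a,b) = (\<Sum>i<r. p t i * U $$ (a,i) * V $$ (b,i))"
    if t: "0 \<le> t" and ab: "a < n" "b < m" for t a b
  proof -
    have Y: "Y t = U * At t" and X: "X t = Bt t * V\<^sup>T" using al(1,2)[OF t t] by (simp_all add: At_def Bt_def)
    have UA: "U * At t \<in> carrier_mat n r" and BV: "Bt t * V\<^sup>T \<in> carrier_mat r m"
      using u v Atc[OF t] Btc[OF t] by auto
    have e1: "(U * At t) $$ (a,l) = U $$ (a,l) * At t $$ (l,l)" if "l < r" for l
    proof -
      have "(U * At t) $$ (a,l) = (\<Sum>k<n. U $$ (a,k) * At t $$ (k,l))"
        by (rule mult_entry[OF u(1) Atc[OF t]]) (use ab that in auto)
      also have "\<dots> = U $$ (a,l) * At t $$ (l,l)"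
        using OD[OF t] that rn by (intro sum_single) auto
      finally show ?thesis .
    qed
    have e2: "(Bt t * V\<^sup>T) $$ (l,b) = Bt t $$ (l,l) * V $$ (b,l)" if "l < r" for l
    proof -
      have "(Bt t * V\<^sup>T) $$ (l,b) = (\<Sum>k<m. Bt t $$ (l,k) * V\<^sup>T $$ (k,b))"
        by (rule mult_entry[OF Btc[OF t] v(2)]) (use ab that in auto)
      also have "\<dots> = Bt t $$ (l,l) * V\<^sup>T $$ (l,b)"
        using OD[OF t] that rm by (intro sum_single) auto
      also have "\<dots> = Bt t $$ (l,l) * V $$ (b,l)" using v ab that rm by simp
      finally show ?thesis .
    qed
    have "(Y t * X t) $$ (a,b) = (\<Sum>l<r. (U * At t) $$ (a,l) * (Bt t * V\<^sup>T) $$ (l,b))"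
      unfolding Y X by (rule mult_entry[OF UA BV ab])
    also have "\<dots> = (\<Sum>l<r. p t l * U $$ (a,l) * V $$ (b,l))"
      by (intro sum.cong refl) (simp add: e1 e2 p_def)
    finally show ?thesis .
  qed
  define L where "L = mat n m (\<lambda>(a,b). \<Sum>i<r. \<Sigma>0 $$ (i,i) * U $$ (a,i) * V $$ (b,i))"
  have part1: "mat_tendsto_at_top n m (\<lambda>t. Y t * X t) L"
    unfolding mat_tendsto_at_top_def
  proof (intro conjI allI impI)
    show "L \<in> carrier_mat n m" unfolding L_def by simp
    fix a b assume ab: "a < n" "b < m"
    have "((\<lambda>t. \<Sum>i<r. p t i * U $$ (a,i) * V $$ (b,i)) \<longlongrightarrow> (\<Sum>i<r. \<Sigma>0 $$ (i,i) * U $$ (a,i) * V $$ (b,i))) at_top"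
      by (intro tendsto_sum tendsto_mult tendsto_const lim_p) auto
    moreover have "\<forall>\<^sub>F t in at_top. (\<Sum>i<r. p t i * U $$ (a,i) * V $$ (b,i)) = (Y t * X t) $$ (a,b)"
      unfolding eventually_at_top_linorder using YX ab by (intro exI[of _ 0]) auto
    ultimately have "((\<lambda>t. (Y t * X t) $$ (a,b)) \<longlongrightarrow> (\<Sum>i<r. \<Sigma>0 $$ (i,i) * U $$ (a,i) * V $$ (b,i))) at_top"
      by (rule Lim_transform_eventually)
    then show "((\<lambda>t. (Y t * X t) $$ (a,b)) \<longlongrightarrow> L $$ (a,b)) at_top" using ab by (simp add: L_def)
  qed
  define g where "g t i = (\<Sigma>0 $$ (i,i) - (if i < r then p t i else 0))^2" for t i
  have F: "frob2 (W0 - Y t * X t) = (\<Sum>i<min n m. g t i)" if t: "0 \<le> t" for t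
  proof -
    define R where "R = \<Sigma>0 - At t * Bt t"
    have Rc: "R \<in> carrier_mat n m" unfolding R_def using Sigma_dim Atc[OF t] Btc[OF t] by auto
    have "frob2 (W0 - Y t * X t) = frob2 (U * R * V\<^sup>T)" using al(3)[OF t t] by (simp add: R_def At_def Bt_def)
    also have "\<dots> = frob2 (U * R)" by (rule frob2_right_orth[OF V_orth]) (use u Rc in auto)
    also have "\<dots> = frob2 R" by (rule frob2_left_orth[OF U_orth Rc])
    also have "\<dots> = (\<Sum>i<n. \<Sum>j<m. (R $$ (i,j))^2)" unfolding frob2_def using Rc by simp
    also have "\<dots> = (\<Sum>i<n. if i < m then g t i else 0)"
    proof (intro sum.cong refl)
      fix i assume i: "i \<in> {..<n}"
      have Rij: "R $$ (i,j) = (if i = j then \<Sigma>0 $$ (i,i) - (if i < r then p t i else 0) else 0)" if j: "j < m" for j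
      proof -
        have "R $$ (i,j) = \<Sigma>0 $$ (i,j) - (At t * Bt t) $$ (i,j)"
          unfolding R_def using i j Atc[OF t] Btc[OF t] by simp
        then show ?thesis using i j P[OF t, of i j] Sigma_diag Sigma_dim
          by (auto simp: diagonal_mat_def)
      qed
      show "(\<Sum>j<m. (R $$ (i,j))^2) = (if i < m then g t i else 0)"
      proof (cases "i < m")
        case True
        have "(\<Sum>j<m. (R $$ (i,j))^2) = (R $$ (i,i))^2"
          using True Rij by (intro sum_single) auto
        then show ?thesis using True Rij by (simp add: g_def)
      next
        case False
        have "(\<Sum>j<m. (R $$ (i,j))^2) = 0" using False Rij by (intro sum.neutral) auto
        then show ?thesis using False by simp
      qed
    qed
    also have "\<dots> = (\<Sum>i\<in>{i\<in>{..<n}. i < m}. g t i)" by (rule sum.inter_filter[symmetric]) simp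
    also have "{i\<in>{..<n}. i < m} = {..<min n m}" by auto
    finally show ?thesis .
  qed
  have lim_g: "((\<lambda>t. g t i) \<longlongrightarrow> (if i < r then 0 else (\<Sigma>0 $$ (i,i))^2)) at_top" for i
  proof (cases "i < r")
    case True
    have "((\<lambda>t. (\<Sigma>0 $$ (i,i) - p t i)^2) \<longlongrightarrow> (\<Sigma>0 $$ (i,i) - \<Sigma>0 $$ (i,i))^2) at_top"
      by (intro tendsto_intros lim_p True)
    then show ?thesis using True by (simp add: g_def)
  next
    case False
    then show ?thesis by (simp add: g_def)
  qed
  have part2: "((\<lambda>t. frob2 (W0 - Y t * X t)) \<longlongrightarrow> (\<Sum>i\<in>{r..<min n m}. (\<Sigma>0 $$ (i,i))^2)) at_top"
  proof -
    have l1: "((\<lambda>t. \<Sum>i<min n m. g t i) \<longlongrightarrow> (\<Sum>i<min n m. if i < r then 0 else (\<Sigma>0 $$ (i,i))^2)) at_top"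
      by (intro tendsto_sum lim_g)
    have l2: "(\<Sum>i<min n m. if i < r then 0 else (\<Sigma>0 $$ (i,i))^2) = (\<Sum>i\<in>{r..<min n m}. (\<Sigma>0 $$ (i,i))^2)"
    proof -
      have "(\<Sum>i<min n m. if i < r then 0 else (\<Sigma>0 $$ (i,i))^2) = (\<Sum>i<min n m. if \<not> i < r then (\<Sigma>0 $$ (i,i))^2 else 0)"
        by (intro sum.cong refl) auto
      also have "\<dots> = (\<Sum>i\<in>{i\<in>{..<min n m}. \<not> i < r}. (\<Sigma>0 $$ (i,i))^2)" by (rule sum.inter_filter[symmetric]) simp
      also have "{i\<in>{..<min n m}. \<not> i < r} = {r..<min n m}" by auto
      finally show ?thesis .
    qed
    have ev: "\<forall>\<^sub>F t in at_top. (\<Sum>i<min n m. g t i) = frob2 (W0 - Y t * X t)"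
      unfolding eventually_at_top_linorder using F by (intro exI[of _ 0]) auto
    from l1 have "((\<lambda>t. \<Sum>i<min n m. g t i) \<longlongrightarrow> (\<Sum>i\<in>{r..<min n m}. (\<Sigma>0 $$ (i,i))^2)) at_top"
      unfolding l2 .
    then show ?thesis using ev by (rule Lim_transform_eventually)
  qed
  show ?thesis using part1 part2 unfolding L_def by blast
qed


end
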